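(* Let $K$ be a nonempty compact Hausdorff topological space and let $X$ be a real Banach space. Then $X$ has the property $( ** )$ if and only if $C(K,X)$ has the property $( ** )$.
   Context: All Banach spaces are real. For a Banach space $Z$, $B_Z$, $S_Z$ and $Z^*$ denote its closed unit ball, unit sphere and dual. For $z^*\in S_{Z^*}$ and $0<\alpha<1$, the slice is $S(z^*,\alpha)=\{z\in B_Z: z^*(z)>1-\alpha\}$, and $-S(z^*,\alpha)=\{-z: z\in S(z^*,\alpha)\}$. A Banach space $Z$ has the property $( ** )$ if for all $z_1,z_2\in S_Z$ and every $\varepsilon>0$ there exists $z^*\in S_{Z^*}$ such that, writing $S=S(z^*,\varepsilon)$, one has $z_1\in S$ and $\operatorname{dist}(z_2,S)+\operatorname{dist}(z_2,-S)<2+\varepsilon$. $C(K,X)$ is the Banach space of all continuous functions $K\to X$ with the supremum norm. *)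

theory Defs
  imports "HOL-Analysis.Analysis"
begin

definition slice :: "('a::real_normed_vector \<Rightarrow> real) \<Rightarrow> real \<Rightarrow> 'a set" where
  "slice f \<alpha> = {z. norm z \<le> 1 \<and> f z > 1 - \<alpha>}"

text \<open>Property (**) of a normed space Z (given as a type).
  Elements of the unit sphere of the dual are bounded linear functionals of operator norm 1.\<close>
definition prop_ss :: "'a::real_normed_vector itself \<Rightarrow> bool" where
  "prop_ss (_::'a itself) \<longleftrightarrow>
     (\<forall>z1 z2 :: 'a. norm z1 = 1 \<longrightarrow> norm z2 = 1 \<longrightarrow>
        (\<forall>\<epsilon>>0. \<exists>f :: 'a \<Rightarrow> real. bounded_linear f \<and> onorm f = 1 \<and>
            z1 \<in> slice f \<epsilon> \<and>
            infdist z2 (slice f \<epsilon>) + infdist z2 (uminus ` slice f \<epsilon>) < 2 + \<epsilon>))"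

end

theory Submission
  imports Defs
begin



lemma infdist_lessE:
  assumes "A \<noteq> {}" "infdist x A < r"
  shows "\<exists>a\<in>A. dist x a < r"
  using assms by (simp add: infdist_notempty cINF_less_iff)

lemma bl_le_onorm:
  fixes g :: "'a::real_normed_vector \<Rightarrow> real"
  assumes "bounded_linear g" "norm y \<le> 1"
  shows "g y \<le> onorm g"
proof -
  have "\<bar>g y\<bar> \<le> onorm g * norm y" using onorm[OF assms(1)] by simp
  also have "\<dots> \<le> onorm g" using assms(2) onorm_pos_le[OF assms(1)]
    by (simp add: mult_left_le)
  finally show ?thesis by simp
qed

lemma onorm_approx:
  fixes g :: "'a::real_normed_vector \<Rightarrow> real"
  assumes bl: "bounded_linear g" and e: "e > 0"
  shows "\<exists>y. norm y \<le> 1 \<and> g y > onorm g - e"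
proof (cases "onorm g - e < 0")
  case True
  then show ?thesis using linear_0[OF bounded_linear.linear[OF bl]] by (intro exI[of _ 0]) auto
next
  case False
  have bdd: "bdd_above (range (\<lambda>x. norm (g x) / norm x))"
    using le_onorm[OF bl] by (auto intro!: bdd_aboveI2)
  have "onorm g - e < onorm g" using e by simp
  then obtain x where x: "onorm g - e < norm (g x) / norm x"
    unfolding onorm_def using less_cSUP_iff[OF UNIV_not_empty bdd] by blast
  then have "x \<noteq> 0" using False by auto
  then have nx: "norm x > 0" by simp
  have lin: "linear g" using bl bounded_linear.linear by blast
  have "g (x /\<^sub>R norm x) = g x / norm x"
    using linear_scale[OF lin] by (simp add: divide_inverse_commute)
  moreover have "g (- (x /\<^sub>R norm x)) = - g x / norm x"
    using linear_neg[OF lin] linear_scale[OF lin] by (simp add: divide_inverse_commute)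
  ultimately show ?thesis using x nx
    by (cases "g x \<ge> 0")
       (rule exI[of _ "x /\<^sub>R norm x"], simp,
        rule exI[of _ "- (x /\<^sub>R norm x)"], simp)
qed

lemma apply_bcontfun_sum:
  "apply_bcontfun (sum f A) t = (\<Sum>i\<in>A. apply_bcontfun (f i) t)"
  for f :: "'i \<Rightarrow> ('a::topological_space, 'b::real_normed_vector) bcontfun"
  by (induction A rule: infinite_finite_induct) auto

lemma norm_const_bcontfun:
  "norm (const_bcontfun c :: ('a::topological_space, 'b::real_normed_vector) bcontfun) = norm c"
  using norm_bound[of "const_bcontfun c :: ('a, 'b) bcontfun" "norm c"]
        norm_bounded[of "const_bcontfun c :: ('a, 'b) bcontfun" undefined]
  by simp

lemma norm_attained:
  fixes z :: "('a::topological_space, 'b::real_normed_vector) bcontfun"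
  assumes "compact (UNIV :: 'a set)"
  shows "\<exists>t. norm (z t) = norm z"
proof -
  have "continuous_on UNIV (\<lambda>t. norm (z t))" by (intro continuous_intros) auto
  then obtain t where t: "\<forall>s. norm (z s) \<le> norm (z t)"
    using continuous_attains_sup[OF assms] by blast
  have "norm z \<le> norm (z t)" by (rule norm_bound) (use t in auto)
  then show ?thesis using norm_bounded[of z t] by (intro exI[of _ t]) simp
qed




lemma bump:
  fixes z :: "('a::topological_space, 'b::real_normed_vector) bcontfun"
  assumes z: "norm z \<le> 1" and u: "norm u \<le> 1" and d: "\<delta> > 0"
  shows "\<exists>h. norm h \<le> 1 \<and> apply_bcontfun h t0 = u \<and> dist z h \<le> norm (z t0 - u) + \<delta>"
proof -
  define \<phi> where "\<phi> t = max 0 (1 - norm (z t - z t0) / \<delta>)" for t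
  define f where "f t = \<phi> t *\<^sub>R u + (1 - \<phi> t) *\<^sub>R z t" for t
  have \<phi>01: "0 \<le> \<phi> t" "\<phi> t \<le> 1" for t
    using d by (auto simp: \<phi>_def)
  have cphi: "continuous_on UNIV \<phi>" unfolding \<phi>_def
    using d by (intro continuous_intros) auto
  have cf: "continuous_on UNIV f" unfolding f_def
    by (intro continuous_intros cphi) auto
  have nf: "norm (f t) \<le> 1" for t
  proof -
    have "norm (f t) \<le> norm (\<phi> t *\<^sub>R u) + norm ((1 - \<phi> t) *\<^sub>R z t)"
      unfolding f_def by (rule norm_triangle_ineq)
    also have "\<dots> = \<phi> t * norm u + (1 - \<phi> t) * norm (z t)"
      using \<phi>01[of t] by simp
    also have "\<dots> \<le> \<phi> t * 1 + (1 - \<phi> t) * 1"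
      using \<phi>01[of t] u order_trans[OF norm_bounded z]
      by (intro add_mono mult_left_mono) auto
    finally show ?thesis by simp
  qed
  have fb: "f \<in> bcontfun" by (rule bcontfun_normI[OF cf nf])
  define h where "h = Bcontfun f"
  have hf: "apply_bcontfun h = f" unfolding h_def using Bcontfun_inverse[OF fb] .
  have "norm h \<le> 1" by (rule norm_bound) (simp add: hf nf)
  moreover have "apply_bcontfun h t0 = u" by (simp add: hf f_def \<phi>_def)
  moreover have "dist z h \<le> norm (z t0 - u) + \<delta>"
  proof (rule dist_bound)
    fix t
    have eq: "z t - f t = \<phi> t *\<^sub>R (z t - u)"
      unfolding f_def by (simp add: algebra_simps)
    have "norm (z t - f t) \<le> norm (z t0 - u) + \<delta>"
    proof (cases "\<phi> t = 0")
      case True then show ?thesis using eq d by simp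
    next
      case False
      then have lt: "norm (z t - z t0) < \<delta>" using d
        by (auto simp: \<phi>_def max_def field_simps split: if_splits)
      have "norm (z t - u) \<le> norm (z t - z t0) + norm (z t0 - u)"
        using norm_triangle_ineq[of "z t - z t0" "z t0 - u"] by simp
      then have "norm (z t - u) \<le> norm (z t0 - u) + \<delta>" using lt by simp
      moreover have "norm (z t - f t) = \<phi> t * norm (z t - u)" using eq \<phi>01[of t] by simp
      ultimately show ?thesis using \<phi>01[of t]
        by (smt (verit) mult_left_le_one_le norm_ge_zero)
    qed
    then show "dist (apply_bcontfun z t) (apply_bcontfun h t) \<le> norm (z t0 - u) + \<delta>"
      by (simp add: hf dist_norm)
  qed
  ultimately show ?thesis by blast
qed




lemma eval_bounded_linear:
  "bounded_linear (\<lambda>h::('a::topological_space, 'b::real_normed_vector) bcontfun. apply_bcontfun h t0)"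
  by (rule bounded_linear_intro[where K=1]) (auto simp: norm_bounded)

lemma dir1:
  assumes K: "compact (UNIV :: 'k::topological_space set)"
    and X: "prop_ss TYPE('x::real_normed_vector)"
  shows "prop_ss TYPE(('k,'x) bcontfun)"
  unfolding prop_ss_def
proof (intro allI impI)
  fix z1 z2 :: "('k,'x) bcontfun" and \<epsilon> :: real
  assume n1: "norm z1 = 1" and n2: "norm z2 = 1" and e: "\<epsilon> > 0"
  obtain t0 where t0: "norm (z1 t0) = 1" using norm_attained[OF K, of z1] n1 by auto
  define y where "y = z2 t0"
  define ny where "ny = norm y"
  have ny01: "0 \<le> ny" "ny \<le> 1" using norm_bounded[of z2 t0] n2 by (auto simp: ny_def y_def)
  define x2 where "x2 = (if y = 0 then z1 t0 else y /\<^sub>R ny)"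
  have nx2: "norm x2 = 1" using t0 by (auto simp: x2_def ny_def)
  have yx2: "y = ny *\<^sub>R x2" by (auto simp: x2_def ny_def)
  from X[unfolded prop_ss_def, rule_format, OF t0 nx2 e] obtain xs :: "'x \<Rightarrow> real" where
    bl: "bounded_linear xs" and on: "onorm xs = 1" and s1: "z1 t0 \<in> slice xs \<epsilon>"
    and sum: "infdist x2 (slice xs \<epsilon>) + infdist x2 (uminus ` slice xs \<epsilon>) < 2 + \<epsilon>"
    by blast
  define S where "S = slice xs \<epsilon>"
  define \<gamma> where "\<gamma> = 2 + \<epsilon> - (infdist x2 S + infdist x2 (uminus ` S))"
  have g: "\<gamma> > 0" using sum by (simp add: \<gamma>_def S_def)
  have Sne: "S \<noteq> {}" "uminus ` S \<noteq> {}" using s1 by (auto simp: S_def)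
  obtain u where u: "u \<in> S" "dist x2 u < infdist x2 S + \<gamma>/4"
    using infdist_lessE[OF Sne(1), of x2 "infdist x2 S + \<gamma>/4"] g by auto
  obtain v where v: "v \<in> uminus ` S" "dist x2 v < infdist x2 (uminus ` S) + \<gamma>/4"
    using infdist_lessE[OF Sne(2), of x2 "infdist x2 (uminus ` S) + \<gamma>/4"] g by auto
  have nu: "norm u \<le> 1" using u(1) by (auto simp: S_def slice_def)
  have nv: "norm v \<le> 1" using v(1) by (auto simp: S_def slice_def)
  have uv: "dist x2 u + dist x2 v < 2 + \<epsilon>"
  proof -
    obtain dA dB where dA: "dA = infdist x2 S" and dB: "dB = infdist x2 (uminus ` S)" by blast
    have "dist x2 u < dA + \<gamma>/4" "dist x2 v < dB + \<gamma>/4" "\<gamma> = 2 + \<epsilon> - (dA + dB)"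
      using u(2) v(2) by (auto simp: dA dB \<gamma>_def)
    then show ?thesis using g by linarith
  qed
  have yu: "norm (y - w) \<le> ny * dist x2 w + (1 - ny)" if "norm w \<le> 1" for w
  proof -
    have "y - w = ny *\<^sub>R (x2 - w) - (1 - ny) *\<^sub>R w" by (simp add: yx2 algebra_simps)
    then have "norm (y - w) \<le> norm (ny *\<^sub>R (x2 - w)) + norm ((1 - ny) *\<^sub>R w)"
      by (metis norm_triangle_ineq4)
    also have "\<dots> = ny * dist x2 w + (1 - ny) * norm w" using ny01 by (simp add: dist_norm)
    also have "\<dots> \<le> ny * dist x2 w + (1 - ny)" using ny01 that
      by (simp add: mult_left_le)
    finally show ?thesis .
  qed
  define \<beta> where "\<beta> = norm (y - u) + norm (y - v)"
  have b1: "\<beta> \<le> ny * (dist x2 u + dist x2 v) + 2 * (1 - ny)"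
  proof -
    have "ny * (dist x2 u + dist x2 v) + 2 * (1 - ny) = (ny * dist x2 u + (1 - ny)) + (ny * dist x2 v + (1 - ny))"
      by (simp add: algebra_simps)
    then show ?thesis using yu[OF nu] yu[OF nv] unfolding \<beta>_def by linarith
  qed
  have b: "\<beta> < 2 + \<epsilon>"
  proof (cases "ny = 0")
    case True then show ?thesis using b1 e by simp
  next
    case False
    then have "ny * (dist x2 u + dist x2 v) < ny * (2 + \<epsilon>)" using ny01 uv by simp
    moreover have "ny * \<epsilon> \<le> \<epsilon>" using ny01 e by (simp add: mult_left_le_one_le)
    moreover have "ny * (2 + \<epsilon>) = 2 * ny + ny * \<epsilon>" by (simp add: algebra_simps)
    moreover have "2 * (1 - ny) = 2 - 2 * ny" by simp
    ultimately show ?thesis using b1 by linarith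
  qed
  define \<delta> where "\<delta> = (2 + \<epsilon> - \<beta>) / 3"
  have d: "\<delta> > 0" using b by (simp add: \<delta>_def)
  define F where "F = (\<lambda>h::('k,'x) bcontfun. xs (h t0))"
  have blF: "bounded_linear F" unfolding F_def
    by (rule bounded_linear_compose[OF bl eval_bounded_linear])
  have onF: "onorm F = 1"
  proof (rule antisym)
    show "onorm F \<le> 1"
    proof (rule onorm_bound)
      fix h :: "('k,'x) bcontfun"
      have "norm (F h) \<le> onorm xs * norm (h t0)" unfolding F_def by (rule onorm[OF bl])
      also have "\<dots> \<le> 1 * norm h" using on norm_bounded[of h t0] by simp
      finally show "norm (F h) \<le> 1 * norm h" .
    qed simp
    have "onorm xs \<le> onorm F"
    proof (rule onorm_bound)
      fix w
      have "norm (xs w) = norm (F (const_bcontfun w))" by (simp add: F_def)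
      also have "\<dots> \<le> onorm F * norm (const_bcontfun w :: ('k,'x) bcontfun)" by (rule onorm[OF blF])
      finally show "norm (xs w) \<le> onorm F * norm w" by (simp add: norm_const_bcontfun)
    qed (rule onorm_pos_le[OF blF])
    then show "1 \<le> onorm F" using on by simp
  qed
  obtain h :: "('k,'x) bcontfun" where h: "norm h \<le> 1" "h t0 = u" "dist z2 h \<le> norm (y - u) + \<delta>"
    using bump[OF _ nu d, of z2 t0] n2 by (auto simp: y_def)
  obtain k :: "('k,'x) bcontfun" where k: "norm k \<le> 1" "k t0 = v" "dist z2 k \<le> norm (y - v) + \<delta>"
    using bump[OF _ nv d, of z2 t0] n2 by (auto simp: y_def)
  have m1: "z1 \<in> slice F \<epsilon>" using s1 n1 by (simp add: slice_def F_def)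
  moreover have hS: "h \<in> slice F \<epsilon>" using u(1) h by (simp add: slice_def F_def S_def)
  moreover have kS: "k \<in> uminus ` slice F \<epsilon>"
  proof -
    have "- v \<in> S" using v(1) by auto
    then have "- k \<in> slice F \<epsilon>" using k by (simp add: slice_def F_def S_def)
    then show ?thesis by (metis image_eqI minus_minus)
  qed
  moreover have fin: "infdist z2 (slice F \<epsilon>) + infdist z2 (uminus ` slice F \<epsilon>) < 2 + \<epsilon>"
  proof -
    have "infdist z2 (slice F \<epsilon>) \<le> dist z2 h" by (rule infdist_le[OF hS])
    moreover have "infdist z2 (uminus ` slice F \<epsilon>) \<le> dist z2 k" by (rule infdist_le[OF kS])
    moreover have "3 * \<delta> = 2 + \<epsilon> - \<beta>" by (simp add: \<delta>_def)
    ultimately show ?thesis using h(3) k(3) \<beta>_def d by linarith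
  qed
  show "\<exists>f. bounded_linear f \<and> onorm f = 1 \<and> z1 \<in> slice f \<epsilon> \<and>
      infdist z2 (slice f \<epsilon>) + infdist z2 (uminus ` slice f \<epsilon>) < 2 + \<epsilon>"
    apply (rule exI[of _ F], intro conjI)
    by (fact blF onF m1 fin)+
qed




lemma partition_unity:
  fixes h k :: "('a::topological_space, 'b::real_normed_vector) bcontfun"
  assumes K: "compact (UNIV::'a set)" and d: "\<delta> > 0"
  shows "\<exists>T (w::'a \<Rightarrow> 'a \<Rightarrow> real). finite T \<and> (\<forall>i\<in>T. continuous_on UNIV (w i)) \<and>
     (\<forall>i\<in>T. \<forall>t. 0 \<le> w i t \<and> w i t \<le> 1) \<and> (\<forall>t. (\<Sum>i\<in>T. w i t) = 1) \<and>
     (\<forall>i\<in>T. \<forall>t. w i t > 0 \<longrightarrow> norm (h t - h i) < \<delta> \<and> norm (k t - k i) < \<delta>)"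
proof -
  define dd where "dd i t = max (norm (h t - h i)) (norm (k t - k i))" for i t
  have cdd: "continuous_on UNIV (dd i)" for i unfolding dd_def
    by (intro continuous_intros) auto
  have opn: "open {t. dd i t < \<delta>}" for i
    by (rule open_Collect_less[OF cdd]) (intro continuous_intros)
  have cov: "(UNIV::'a set) \<subseteq> (\<Union>i\<in>UNIV. {t. dd i t < \<delta>})"
  proof
    fix t :: 'a
    have "dd t t < \<delta>" using d by (simp add: dd_def)
    then show "t \<in> (\<Union>i\<in>UNIV. {t. dd i t < \<delta>})" by blast
  qed
  obtain T where T: "finite T" "(UNIV::'a set) \<subseteq> (\<Union>i\<in>T. {t. dd i t < \<delta>})"
  proof (rule compactE_image[OF K opn cov])
    fix C' assume "C' \<subseteq> UNIV" "finite C'" "(UNIV::'a set) \<subseteq> (\<Union>c\<in>C'. {t. dd c t < \<delta>})"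
    then show thesis by (intro that[of C'])
  qed
  define \<psi> where "\<psi> i t = max 0 (\<delta> - dd i t)" for i t
  define \<sigma> where "\<sigma> t = (\<Sum>i\<in>T. \<psi> i t)" for t
  have psi0: "0 \<le> \<psi> i t" for i t by (simp add: \<psi>_def)
  have sig_pos: "\<sigma> t > 0" for t
  proof -
    obtain i where "i \<in> T" "dd i t < \<delta>" using T(2) by blast
    then have "\<psi> i t > 0" by (simp add: \<psi>_def)
    moreover have "\<psi> i t \<le> \<sigma> t" unfolding \<sigma>_def
      by (rule member_le_sum) (use \<open>i \<in> T\<close> T(1) psi0 in auto)
    ultimately show ?thesis by simp
  qed
  have psi_le: "\<psi> i t \<le> \<sigma> t" if "i \<in> T" for i t unfolding \<sigma>_def
    by (rule member_le_sum) (use that T(1) psi0 in auto)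
  define w where "w i t = \<psi> i t / \<sigma> t" for i t
  have cpsi: "continuous_on UNIV (\<psi> i)" for i unfolding \<psi>_def
    by (intro continuous_intros cdd)
  have csig: "continuous_on UNIV \<sigma>" unfolding \<sigma>_def
    by (intro continuous_intros cpsi)
  have c: "\<forall>i\<in>T. continuous_on UNIV (w i)" unfolding w_def
  proof
    fix i assume "i \<in> T"
    show "continuous_on UNIV (\<lambda>t. \<psi> i t / \<sigma> t)"
      by (rule continuous_on_divide[OF cpsi csig]) (use sig_pos in \<open>simp add: less_imp_neq[symmetric]\<close>)
  qed
  have b: "\<forall>i\<in>T. \<forall>t. 0 \<le> w i t \<and> w i t \<le> 1"
  proof (intro ballI allI conjI)
    fix i t assume i: "i \<in> T"
    show "0 \<le> w i t" using psi0[of i t] sig_pos[of t] by (simp add: w_def)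
    show "w i t \<le> 1" using psi_le[OF i, of t] sig_pos[of t] by (simp add: w_def divide_le_eq)
  qed
  have s: "\<forall>t. (\<Sum>i\<in>T. w i t) = 1"
  proof
    fix t
    have "(\<Sum>i\<in>T. w i t) = (\<Sum>i\<in>T. \<psi> i t) / \<sigma> t"
      unfolding w_def by (rule sum_divide_distrib[symmetric])
    also have "\<dots> = 1" using sig_pos[of t] by (simp add: \<sigma>_def[symmetric])
    finally show "(\<Sum>i\<in>T. w i t) = 1" .
  qed
  have cl: "\<forall>i\<in>T. \<forall>t. w i t > 0 \<longrightarrow> norm (h t - h i) < \<delta> \<and> norm (k t - k i) < \<delta>"
  proof (intro ballI allI impI)
    fix i t assume "i \<in> T" "w i t > 0"
    then have "\<psi> i t > 0" using sig_pos[of t] by (simp add: w_def zero_less_divide_iff)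
    then have "dd i t < \<delta>" by (simp add: \<psi>_def)
    then show "norm (h t - h i) < \<delta> \<and> norm (k t - k i) < \<delta>" by (simp add: dd_def)
  qed
  show ?thesis
    apply (rule exI[of _ T], rule exI[of _ w], intro conjI)
    by (fact T(1) c b s cl)+
qed




lemma dir2:
  assumes K: "compact (UNIV :: 'k::topological_space set)"
    and P: "prop_ss TYPE(('k,'x::real_normed_vector) bcontfun)"
  shows "prop_ss TYPE('x)"
  unfolding prop_ss_def
proof (intro allI impI)
  fix x1 x2 :: 'x and \<epsilon> :: real
  assume n1: "norm x1 = 1" and n2: "norm x2 = 1" and e: "\<epsilon> > 0"
  define m where "m = min \<epsilon> 1"
  define \<eta> where "\<eta> = m / 20"
  have m: "0 < m" "m \<le> 1" "m \<le> \<epsilon>" using e by (auto simp: m_def)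
  have eta: "0 < \<eta>" "\<eta> \<le> \<epsilon>" using m by (auto simp: \<eta>_def)
  define c1 where "c1 = (const_bcontfun x1 :: ('k,'x) bcontfun)"
  define c2 where "c2 = (const_bcontfun x2 :: ('k,'x) bcontfun)"
  have nc: "norm c1 = 1" "norm c2 = 1" using n1 n2 by (simp_all add: c1_def c2_def norm_const_bcontfun)
  from P[unfolded prop_ss_def, rule_format, OF nc eta(1)] obtain F :: "('k,'x) bcontfun \<Rightarrow> real" where
    blF: "bounded_linear F" and onF: "onorm F = 1" and s1: "c1 \<in> slice F \<eta>"
    and sum: "infdist c2 (slice F \<eta>) + infdist c2 (uminus ` slice F \<eta>) < 2 + \<eta>"
    by blast
  define S where "S = slice F \<eta>"
  have Sne: "S \<noteq> {}" "uminus ` S \<noteq> {}" using s1 by (auto simp: S_def)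
  obtain dA dB where dA: "dA = infdist c2 S" and dB: "dB = infdist c2 (uminus ` S)" by blast
  define \<gamma> where "\<gamma> = 2 + \<eta> - (dA + dB)"
  have g: "\<gamma> > 0" using sum by (simp add: \<gamma>_def S_def dA dB)
  obtain h where h: "h \<in> S" "dist c2 h < dA + \<gamma>/2"
    using infdist_lessE[OF Sne(1), of c2 "dA + \<gamma>/2"] g dA by auto
  obtain k0 where k0: "k0 \<in> uminus ` S" "dist c2 k0 < dB + \<gamma>/2"
    using infdist_lessE[OF Sne(2), of c2 "dB + \<gamma>/2"] g dB by auto
  obtain k where k: "k \<in> S" "k0 = - k" using k0(1) by auto
  have hk: "dist c2 h + dist c2 (- k) < 2 + \<eta>" using h(2) k0(2)[unfolded k(2)] g \<gamma>_def by linarith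
  have linF: "linear F" using blF bounded_linear.linear by blast
  have Fbound: "\<bar>F z\<bar> \<le> norm z" for z using onorm[OF blF, of z] onF by simp
  have hS: "norm h \<le> 1" "F h > 1 - \<eta>" using h(1) by (auto simp: S_def slice_def)
  have kS: "norm k \<le> 1" "F k > 1 - \<eta>" using k(1) by (auto simp: S_def slice_def)
  have c1S: "F c1 > 1 - \<eta>" using s1 by (auto simp: slice_def)
  obtain T and w :: "'k \<Rightarrow> 'k \<Rightarrow> real" where T: "finite T" and wc: "\<forall>i\<in>T. continuous_on UNIV (w i)"
    and w01: "\<forall>i\<in>T. \<forall>t. 0 \<le> w i t \<and> w i t \<le> 1" and w1: "\<forall>t. (\<Sum>i\<in>T. w i t) = 1"
    and wclose: "\<forall>i\<in>T. \<forall>t. w i t > 0 \<longrightarrow> norm (h t - h i) < \<eta> \<and> norm (k t - k i) < \<eta>"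
    using partition_unity[OF K eta(1), of h k] by (elim exE conjE) (rule that, assumption+)
  have Tne: "T \<noteq> {}" using spec[OF w1, of undefined] by auto
  define mult :: "'k \<Rightarrow> 'x \<Rightarrow> ('k,'x) bcontfun" where "mult i x = Bcontfun (\<lambda>t. w i t *\<^sub>R x)" for i x
  have mult_ap: "apply_bcontfun (mult i x) = (\<lambda>t. w i t *\<^sub>R x)" if "i \<in> T" for i x
  proof -
    have "(\<lambda>t. w i t *\<^sub>R x) \<in> bcontfun"
    proof (rule bcontfun_normI)
      show "continuous_on UNIV (\<lambda>t. w i t *\<^sub>R x)" using wc that by (intro continuous_intros) auto
      show "norm (w i t *\<^sub>R x) \<le> norm x" for t using w01 that by (simp add: mult_left_le_one_le)
    qed
    then show ?thesis unfolding mult_def by (rule Bcontfun_inverse)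
  qed
  define g where "g i x = F (mult i x)" for i x
  have blg: "bounded_linear (g i)" if "i \<in> T" for i
  proof -
    have "bounded_linear (mult i)"
    proof (rule bounded_linear_intro[where K=1])
      show "mult i (x + y) = mult i x + mult i y" for x y
        by (rule bcontfun_eqI) (simp add: mult_ap[OF that] scaleR_right_distrib)
      show "mult i (r *\<^sub>R x) = r *\<^sub>R mult i x" for r x
        by (rule bcontfun_eqI) (simp add: mult_ap[OF that])
      show "norm (mult i x) \<le> norm x * 1" for x
        by (simp, rule norm_bound) (use w01 that in \<open>simp add: mult_ap[OF that] mult_left_le_one_le\<close>)
    qed
    then show ?thesis unfolding g_def[abs_def] using bounded_linear_compose[OF blF] by blast
  qed
  have sum_ap: "apply_bcontfun (\<Sum>i\<in>T. mult i (y i)) t = (\<Sum>i\<in>T. w i t *\<^sub>R y i)" for y t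
    by (simp add: apply_bcontfun_sum mult_ap)
  have Fsum: "F (\<Sum>i\<in>T. mult i (y i)) = (\<Sum>i\<in>T. g i (y i))" for y
    by (simp add: linear_sum[OF linF] g_def)
  have sum_norm: "norm (\<Sum>i\<in>T. mult i (y i)) \<le> 1" if "\<forall>i\<in>T. norm (y i) \<le> 1" for y
  proof (rule norm_bound)
    fix t
    have "norm (\<Sum>i\<in>T. w i t *\<^sub>R y i) \<le> (\<Sum>i\<in>T. norm (w i t *\<^sub>R y i))" by (rule norm_sum)
    also have "\<dots> \<le> (\<Sum>i\<in>T. w i t)"
    proof (rule sum_mono)
      fix i assume i: "i \<in> T"
      have "0 \<le> w i t" "norm (y i) \<le> 1" using w01 that i by auto
      then show "norm (w i t *\<^sub>R y i) \<le> w i t" by (simp add: mult_left_le)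
    qed
    finally show "norm (apply_bcontfun (\<Sum>i\<in>T. mult i (y i)) t) \<le> 1" using w1 by (simp add: sum_ap)
  qed
  have close: "norm (z - (\<Sum>i\<in>T. mult i (z i))) \<le> \<eta>"
    if zc: "\<forall>i\<in>T. \<forall>t. w i t > 0 \<longrightarrow> norm (z t - z i) < \<eta>" for z :: "('k,'x) bcontfun"
  proof (rule norm_bound)
    fix t
    have "z t = (\<Sum>i\<in>T. w i t) *\<^sub>R z t" using w1 by simp
    then have "z t - (\<Sum>i\<in>T. w i t *\<^sub>R z i) = (\<Sum>i\<in>T. w i t *\<^sub>R (z t - z i))"
      by (simp add: scaleR_sum_left sum_subtractf scaleR_diff_right)
    then have "norm (z t - (\<Sum>i\<in>T. w i t *\<^sub>R z i)) \<le> (\<Sum>i\<in>T. norm (w i t *\<^sub>R (z t - z i)))"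
      by (simp only:) (rule norm_sum)
    also have "\<dots> \<le> (\<Sum>i\<in>T. w i t * \<eta>)"
    proof (rule sum_mono)
      fix i assume i: "i \<in> T"
      show "norm (w i t *\<^sub>R (z t - z i)) \<le> w i t * \<eta>"
      proof (cases "w i t > 0")
        case True then show ?thesis using zc i by (simp add: less_imp_le)
      next
        case False then have "w i t = 0" using w01 i by (meson antisym not_less)
        then show ?thesis by simp
      qed
    qed
    also have "\<dots> = \<eta>" using w1 by (simp add: sum_distrib_right[symmetric])
    finally show "norm (apply_bcontfun (z - (\<Sum>i\<in>T. mult i (z i))) t) \<le> \<eta>"
      by (simp add: sum_ap)
  qed
  have approx: "F z \<le> (\<Sum>i\<in>T. g i (z i)) + \<eta>"
    if zc: "\<forall>i\<in>T. \<forall>t. w i t > 0 \<longrightarrow> norm (z t - z i) < \<eta>" for z :: "('k,'x) bcontfun"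
  proof -
    have "F z - F (\<Sum>i\<in>T. mult i (z i)) = F (z - (\<Sum>i\<in>T. mult i (z i)))"
      by (simp add: linear_diff[OF linF])
    also have "\<dots> \<le> \<eta>" using Fbound[of "z - (\<Sum>i\<in>T. mult i (z i))"] close[OF zc] by linarith
    finally show ?thesis using Fsum[of z] by linarith
  qed
  have "\<forall>i\<in>T. \<forall>t. w i t > 0 \<longrightarrow> norm (h t - h i) < \<eta>" using wclose by blast
  then have "F h \<le> (\<Sum>i\<in>T. g i (h i)) + \<eta>" by (rule approx)
  then have Sh: "(\<Sum>i\<in>T. g i (h i)) > 1 - 2 * \<eta>" using hS(2) by linarith
  have "\<forall>i\<in>T. \<forall>t. w i t > 0 \<longrightarrow> norm (k t - k i) < \<eta>" using wclose by blast
  then have "F k \<le> (\<Sum>i\<in>T. g i (k i)) + \<eta>" by (rule approx)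
  then have Sk: "(\<Sum>i\<in>T. g i (k i)) > 1 - 2 * \<eta>" using kS(2) by linarith
  have c1sum: "c1 = (\<Sum>i\<in>T. mult i x1)"
    by (rule bcontfun_eqI) (simp add: sum_ap c1_def scaleR_sum_left[symmetric] w1)
  have Sx: "(\<Sum>i\<in>T. g i x1) > 1 - \<eta>" using c1S c1sum Fsum[of "\<lambda>_. x1"] by simp
  define lam where "lam i = onorm (g i)" for i
  have lam0: "lam i \<ge> 0" if "i \<in> T" for i using onorm_pos_le[OF blg[OF that]] by (simp add: lam_def)
  have gle: "g i y \<le> lam i" if "i \<in> T" "norm y \<le> 1" for i y
    unfolding lam_def by (rule bl_le_onorm[OF blg[OF that(1)] that(2)])
  have cardpos: "card T > 0" using T Tne by (simp add: card_gt_0_iff)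
  have "\<forall>i\<in>T. \<exists>y. norm y \<le> 1 \<and> g i y > lam i - \<eta> / card T"
    using onorm_approx[OF blg] eta cardpos by (auto simp: lam_def)
  then obtain Y where Y: "\<forall>i\<in>T. norm (Y i) \<le> 1 \<and> g i (Y i) > lam i - \<eta> / card T"
    by metis
  have Slam: "(\<Sum>i\<in>T. lam i) < 1 + \<eta>"
  proof -
    have "(\<Sum>i\<in>T. lam i - \<eta> / card T) < (\<Sum>i\<in>T. g i (Y i))"
      by (rule sum_strict_mono) (use T Tne Y in auto)
    also have "\<dots> = F (\<Sum>i\<in>T. mult i (Y i))" by (rule Fsum[symmetric])
    also have "\<dots> \<le> 1"
    proof -
      have "\<forall>i\<in>T. norm (Y i) \<le> 1" using Y by blast
      then have "norm (\<Sum>i\<in>T. mult i (Y i)) \<le> 1" by (rule sum_norm)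
      then show ?thesis using Fbound[of "\<Sum>i\<in>T. mult i (Y i)"] by linarith
    qed
    finally show ?thesis using cardpos by (simp add: sum_subtractf)
  qed
  have Slam2: "(\<Sum>i\<in>T. lam i) > 1 - \<eta>"
  proof -
    have "(\<Sum>i\<in>T. g i x1) \<le> (\<Sum>i\<in>T. lam i)" by (rule sum_mono) (use gle n1 in auto)
    then show ?thesis using Sx by linarith
  qed
  have nh: "norm (h i) \<le> 1" for i using norm_bounded[of h i] hS by linarith
  have nk: "norm (k i) \<le> 1" for i using norm_bounded[of k i] kS by linarith
  obtain i where i: "i \<in> T" "lam i > 0" "g i x1 > (1 - m) * lam i"
      "g i (h i) > (1 - m) * lam i" "g i (k i) > (1 - m) * lam i"
  proof (rule ccontr)
    assume "\<not> thesis"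
    with that have no: "\<forall>i\<in>T. \<not> (lam i > 0 \<and> g i x1 > (1 - m) * lam i \<and>
       g i (h i) > (1 - m) * lam i \<and> g i (k i) > (1 - m) * lam i)" by blast
    have each: "m * lam i \<le> 3 * lam i - g i x1 - g i (h i) - g i (k i)" if it: "i \<in> T" for i
    proof -
      have a: "g i x1 \<le> lam i" "g i (h i) \<le> lam i" "g i (k i) \<le> lam i"
        using gle[OF it] n1 nh nk by auto
      show ?thesis
      proof (cases "lam i > 0")
        case False then have "lam i = 0" using lam0[OF it] by simp
        then show ?thesis using a by simp
      next
        case True
        then have "g i x1 \<le> (1 - m) * lam i \<or> g i (h i) \<le> (1 - m) * lam i \<or> g i (k i) \<le> (1 - m) * lam i"
          using no it by auto
        then show ?thesis using a by (auto simp: algebra_simps)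
      qed
    qed
    have "m * (\<Sum>i\<in>T. lam i) \<le> (\<Sum>i\<in>T. 3 * lam i - g i x1 - g i (h i) - g i (k i))"
      unfolding sum_distrib_left by (rule sum_mono) (rule each)
    also have "\<dots> = 3 * (\<Sum>i\<in>T. lam i) - (\<Sum>i\<in>T. g i x1) - (\<Sum>i\<in>T. g i (h i)) - (\<Sum>i\<in>T. g i (k i))"
      by (simp add: sum_subtractf sum_distrib_left)
    finally have A: "m * (\<Sum>i\<in>T. lam i) < 8 * \<eta>" using Slam Sx Sh Sk by linarith
    have "m * (1 - \<eta>) \<le> m * (\<Sum>i\<in>T. lam i)" using Slam2 m by (intro mult_left_mono) auto
    moreover have "m * (1 - \<eta>) = m - m * m / 20" by (simp add: \<eta>_def algebra_simps)
    moreover have "m * m \<le> m" using m by (simp add: mult_left_le_one_le)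
    ultimately show False using A m by (simp add: \<eta>_def)
  qed
  define xs where "xs x = (1 / lam i) *\<^sub>R g i x" for x
  have blxs: "bounded_linear xs" unfolding xs_def[abs_def]
    by (rule bounded_linear_compose[OF bounded_linear_scaleR_right blg[OF i(1)]])
  have onxs: "onorm xs = 1" unfolding xs_def[abs_def]
    using onorm_scaleR[OF blg[OF i(1)], of "1 / lam i"] i(2) by (simp add: lam_def)
  have big: "xs y > 1 - \<epsilon>" if "g i y > (1 - m) * lam i" for y
  proof -
    have "xs y = g i y / lam i" by (simp add: xs_def)
    moreover have "g i y / lam i > 1 - m" using that i(2) by (simp add: less_divide_eq)
    ultimately show ?thesis using m by linarith
  qed
  have "x1 \<in> slice xs \<epsilon>" using big[OF i(3)] n1 by (simp add: slice_def)
  moreover have uS: "h i \<in> slice xs \<epsilon>" using big[OF i(4)] nh by (simp add: slice_def)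
  moreover have vS: "- k i \<in> uminus ` slice xs \<epsilon>" using big[OF i(5)] nk by (simp add: slice_def)
  moreover have "infdist x2 (slice xs \<epsilon>) + infdist x2 (uminus ` slice xs \<epsilon>) < 2 + \<epsilon>"
  proof -
    have "infdist x2 (slice xs \<epsilon>) \<le> dist x2 (h i)" by (rule infdist_le[OF uS])
    also have "\<dots> \<le> dist c2 h" using dist_bounded[of c2 i h] by (simp add: c2_def)
    finally have 1: "infdist x2 (slice xs \<epsilon>) \<le> dist c2 h" .
    have "infdist x2 (uminus ` slice xs \<epsilon>) \<le> dist x2 (- k i)" by (rule infdist_le[OF vS])
    also have "\<dots> \<le> dist c2 (- k)" using dist_bounded[of c2 i "- k"] by (simp add: c2_def)
    finally have 2: "infdist x2 (uminus ` slice xs \<epsilon>) \<le> dist c2 (- k)" .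
    show ?thesis using 1 2 hk eta by linarith
  qed
  ultimately show "\<exists>f. bounded_linear f \<and> onorm f = 1 \<and> x1 \<in> slice f \<epsilon> \<and>
      infdist x2 (slice f \<epsilon>) + infdist x2 (uminus ` slice f \<epsilon>) < 2 + \<epsilon>"
    using blxs onxs by (intro exI[of _ xs] conjI)
qed


theorem theorem2p1:
  assumes "compact (UNIV :: 'k::t2_space set)"
  shows "prop_ss TYPE('x::banach) \<longleftrightarrow> prop_ss TYPE(('k, 'x) bcontfun)"
  using dir1[OF assms] dir2[OF assms] by blast

end
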